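(* Let $d\ge2$ and let $\{S_i\}_{i\in\mathcal I}$ be a finite family of contracting similarities of $\mathbb{R}^d$ with ratios $c_i$ which all share a common fixed point (so that the attractor $F_\emptyset$ is a singleton). Let $s$ be the similarity dimension. If $C\subset\mathbb{R}^d$ is a singleton (or any compact set of box dimension $0$), then the inhomogeneous attractor $F_C$ satisfies \[ \overline{\dim}_{\mathrm B}F_C\le\frac{s}{1+\frac{s}{d-1}}=\frac{d-1}{1+\frac{d-1}{s}}<d-1. \]
   Context: $F_C$ is the unique non-empty compact set with $F_C=\bigcup_iS_i(F_C)\cup C$; $F_\emptyset$ the unique non-empty compact set with $F_\emptyset=\bigcup_iS_i(F_\emptyset)$. The similarity dimension $s$ is the unique $s\ge0$ with $\sum_ic_i^s=1$. $\overline{\dim}_{\mathrm B}$ is upper box dimension. *)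

theory Defs
  imports "HOL-Analysis.Analysis"
begin

definition similarity_with_ratio :: "real \<Rightarrow> ('a::metric_space \<Rightarrow> 'a) \<Rightarrow> bool" where
  "similarity_with_ratio c f \<longleftrightarrow> (\<forall>x y. dist (f x) (f y) = c * dist x y)"

definition covering_number :: "real \<Rightarrow> 'a::metric_space set \<Rightarrow> nat" where
  "covering_number \<delta> F = (LEAST n. \<exists>A. finite A \<and> card A = n \<and> F \<subseteq> (\<Union>x\<in>A. cball x \<delta>))"

definition upper_box_dim :: "'a::metric_space set \<Rightarrow> ereal" where
  "upper_box_dim F = Limsup (at_right 0)
      (\<lambda>\<delta>. ereal (ln (real (covering_number \<delta> F)) / (- ln \<delta>)))"

end

theory Submission
  imports Defs "HOL-Real_Asymp.Real_Asymp"
begin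

definition covers :: "real \<Rightarrow> 'a::metric_space set \<Rightarrow> real \<Rightarrow> bool" where
  "covers \<delta> X B \<longleftrightarrow> (\<exists>A. finite A \<and> real (card A) \<le> B \<and> X \<subseteq> (\<Union>x\<in>A. cball x \<delta>))"

lemma covers_cov: "covers \<delta> X B \<Longrightarrow> real (covering_number \<delta> X) \<le> B"
proof -
  assume "covers \<delta> X B"
  then obtain A where A: "finite A" "real (card A) \<le> B" "X \<subseteq> (\<Union>x\<in>A. cball x \<delta>)"
    unfolding covers_def by blast
  have "covering_number \<delta> X \<le> card A" unfolding covering_number_def
    by (rule Least_le) (use A in blast)
  thus ?thesis using A by linarith
qed

lemma covers_mono: "covers \<delta> X B \<Longrightarrow> Y \<subseteq> X \<Longrightarrow> B \<le> B' \<Longrightarrow> covers \<delta> Y B'"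
  unfolding covers_def by (meson order_trans)

lemma covers_Un: "covers \<delta> X B \<Longrightarrow> covers \<delta> Y B' \<Longrightarrow> covers \<delta> (X \<union> Y) (B + B')"
proof -
  assume "covers \<delta> X B" "covers \<delta> Y B'"
  then obtain A A' where A: "finite A" "real (card A) \<le> B" "X \<subseteq> (\<Union>x\<in>A. cball x \<delta>)"
    and A': "finite A'" "real (card A') \<le> B'" "Y \<subseteq> (\<Union>x\<in>A'. cball x \<delta>)"
    unfolding covers_def by blast
  have "card (A \<union> A') \<le> card A + card A'" by (rule card_Un_le)
  hence "real (card (A \<union> A')) \<le> B + B'" using A A' by linarith
  thus ?thesis unfolding covers_def using A A' by (intro exI[of _ "A \<union> A'"]) auto
qed

lemma covers_UN: "finite J \<Longrightarrow> (\<And>j. j \<in> J \<Longrightarrow> covers \<delta> (X j) (B j)) \<Longrightarrow>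
   covers \<delta> (\<Union>j\<in>J. X j) (\<Sum>j\<in>J. B j)"
proof (induction J rule: finite_induct)
  case empty
  then show ?case unfolding covers_def by (intro exI[of _ "{}"]) auto
next
  case (insert x F)
  then show ?case using covers_Un[of \<delta> "X x" "B x" "\<Union>j\<in>F. X j" "\<Sum>j\<in>F. B j"] by auto
qed

lemma covers_image:
  assumes "covers \<delta> X B" "\<And>x y. dist (f x) (f y) \<le> dist x y"
  shows "covers \<delta> (f ` X) B"
proof -
  obtain A where A: "finite A" "real (card A) \<le> B" "X \<subseteq> (\<Union>x\<in>A. cball x \<delta>)"
    using assms(1) unfolding covers_def by blast
  have "f ` X \<subseteq> (\<Union>x\<in>f ` A. cball x \<delta>)"
  proof
    fix y assume "y \<in> f ` X"
    then obtain x a where "y = f x" "a \<in> A" "dist a x \<le> \<delta>" using A(3) by fastforce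
    thus "y \<in> (\<Union>x\<in>f ` A. cball x \<delta>)" using assms(2)[of a x] by force
  qed
  moreover have "real (card (f ` A)) \<le> B" using A card_image_le[of A f] by linarith
  ultimately show ?thesis unfolding covers_def using A by blast
qed

lemma covers_point: "covers \<delta> (cball p \<delta>) 1"
  unfolding covers_def by (intro exI[of _ "{p}"]) auto

definition sep :: "real \<Rightarrow> 'a::metric_space set \<Rightarrow> bool" where
  "sep \<delta> Y \<longleftrightarrow> (\<forall>y\<in>Y. \<forall>z\<in>Y. y \<noteq> z \<longrightarrow> dist y z > \<delta>)"

lemma packing_covers:
  fixes B :: nat
  assumes d0: "\<delta> \<ge> 0" and "\<And>Y. finite Y \<Longrightarrow> Y \<subseteq> X \<Longrightarrow> sep \<delta> Y \<Longrightarrow> card Y \<le> B"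
  shows "covers \<delta> X (real B)"
proof -
  let ?P = "\<lambda>Y. finite Y \<and> Y \<subseteq> X \<and> sep \<delta> Y"
  have "?P {}" unfolding sep_def by auto
  moreover have "\<forall>Y. ?P Y \<longrightarrow> card Y < Suc B" using assms(2) by (simp add: less_Suc_eq_le)
  ultimately obtain Y where Y: "?P Y" and mx: "\<forall>Z. ?P Z \<longrightarrow> card Z \<le> card Y"
    using ex_has_greatest_nat[of ?P "{}" card "Suc B"] by blast
  have "X \<subseteq> (\<Union>y\<in>Y. cball y \<delta>)"
  proof
    fix x assume x: "x \<in> X"
    show "x \<in> (\<Union>y\<in>Y. cball y \<delta>)"
    proof (rule ccontr)
      assume "x \<notin> (\<Union>y\<in>Y. cball y \<delta>)"
      hence far: "\<forall>y\<in>Y. dist y x > \<delta>" by (auto simp: not_le)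
      hence xY: "x \<notin> Y" using d0 by force
      have "?P (insert x Y)" using Y x far unfolding sep_def by (auto simp: dist_commute)
      hence "card (insert x Y) \<le> card Y" using mx by blast
      thus False using xY Y by simp
    qed
  qed
  thus ?thesis unfolding covers_def using Y assms(2) by (intro exI[of _ Y]) auto
qed

lemma vol_ball: "r \<ge> 0 \<Longrightarrow> measure lebesgue (ball (c::'a::euclidean_space) r) = unit_ball_vol DIM('a) * r ^ DIM('a)"
  using content_ball[of r c] by simp
lemma vol_cball: "r \<ge> 0 \<Longrightarrow> measure lebesgue (cball (c::'a::euclidean_space) r) = unit_ball_vol DIM('a) * r ^ DIM('a)"
  using content_cball[of r c] by simp

lemma pow_diff_le: "0 \<le> y \<Longrightarrow> y \<le> (x::real) \<Longrightarrow> x ^ n - y ^ n \<le> real n * x ^ (n - 1) * (x - y)"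
proof -
  assume a: "0 \<le> y" "y \<le> x"
  have "x ^ n - y ^ n = (x - y) * (\<Sum>i<n. y ^ (n - Suc i) * x ^ i)" by (rule power_diff_sumr2)
  also have "(\<Sum>i<n. y ^ (n - Suc i) * x ^ i) \<le> (\<Sum>i<n. x ^ (n - 1))"
  proof (rule sum_mono)
    fix i assume "i \<in> {..<n}"
    hence "y ^ (n - Suc i) * x ^ i \<le> x ^ (n - Suc i) * x ^ i"
      using a by (intro mult_right_mono power_mono) auto
    also have "\<dots> = x ^ (n - 1)" using \<open>i \<in> {..<n}\<close> by (simp flip: power_add)
    finally show "y ^ (n - Suc i) * x ^ i \<le> x ^ (n - 1)" .
  qed
  hence "(x - y) * (\<Sum>i<n. y ^ (n - Suc i) * x ^ i) \<le> (x - y) * (\<Sum>i<n. x ^ (n - 1))"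
    using a by (intro mult_left_mono) auto
  finally show ?thesis by (simp add: algebra_simps)
qed

lemma aux_minmax: "\<bar>z - m\<bar> \<le> \<delta> \<Longrightarrow> z \<le> L \<Longrightarrow> 0 < \<delta> \<Longrightarrow> 0 \<le> z \<Longrightarrow>
   max 0 (m - 3*\<delta>/2) \<le> min (m+\<delta>) L + \<delta>/2" for z m \<delta> L :: real by auto

lemma aux_max: "\<bar>y - m\<bar> \<le> \<delta> \<Longrightarrow> y - \<delta>/2 < w \<Longrightarrow> 0 \<le> w \<Longrightarrow>
   max 0 (m - 3*\<delta>/2) \<le> w" for y w m \<delta> :: real by auto

lemma shell_sep_card:
  fixes p :: "'a::euclidean_space"
  assumes d: "\<delta> > 0" and L: "L \<ge> 0" and fin: "finite Y"
    and sub: "Y \<subseteq> {y. \<bar>dist y p - m\<bar> \<le> \<delta> \<and> dist y p \<le> L}" and sp: "sep \<delta> Y"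
  shows "real (card Y) \<le> 3 * DIM('a) * 2 ^ DIM('a) * (L / \<delta> + 1) ^ (DIM('a) - 1)"
proof (cases "Y = {}")
  case True
  have "L / \<delta> + 1 \<ge> 0" using d L by simp
  then show ?thesis using True by simp
next
  case False
  then obtain y0 where y0: "y0 \<in> Y" by blast
  define n where "n = DIM('a)"
  define w where "w = unit_ball_vol (real n)"
  have w: "w > 0" unfolding w_def by simp
  have n1: "n \<ge> 1" unfolding n_def by (simp add: DIM_positive Suc_leI)
  define Bd where "Bd = min (m + \<delta>) L + \<delta> / 2"
  define A' where "A' = max 0 (m - 3 * \<delta> / 2)"
  have A'0: "A' \<ge> 0" unfolding A'_def by simp
  have y0p: "\<bar>dist y0 p - m\<bar> \<le> \<delta>" "dist y0 p \<le> L" using sub y0 by auto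
  have dy0: "0 \<le> dist y0 p" by simp
  have AB: "A' \<le> Bd" unfolding A'_def Bd_def using aux_minmax[OF y0p d dy0] .
  have Bd_le: "Bd \<le> L + \<delta>" and Bd_diff: "Bd - A' \<le> 3 * \<delta>" unfolding A'_def Bd_def using d y0p by auto
  have Bd0: "Bd \<ge> 0" using AB A'0 by simp
  have inc: "ball y (\<delta>/2) \<subseteq> cball p Bd - ball p A'" if "y \<in> Y" for y
  proof
    fix z assume z: "z \<in> ball y (\<delta>/2)"
    have yp: "\<bar>dist y p - m\<bar> \<le> \<delta>" "dist y p \<le> L" using sub that by auto
    have "dist z p \<le> dist z y + dist y p" by (rule dist_triangle)
    moreover have "dist y p \<le> dist y z + dist z p" by (rule dist_triangle)
    moreover have "dist z y < \<delta>/2" using z by (simp add: dist_commute)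
    ultimately have h1: "dist z p < \<delta>/2 + dist y p" and h2: "dist y p - \<delta>/2 < dist z p"
      by (auto simp: dist_commute)
    have "dist z p \<le> Bd" unfolding Bd_def using h1 yp by auto
    moreover have "A' \<le> dist z p" unfolding A'_def using aux_max[OF yp(1) h2 zero_le_dist[of z p]] .
    ultimately show "z \<in> cball p Bd - ball p A'" by (auto simp: dist_commute)
  qed
  have disj: "pairwise (\<lambda>y z. disjnt (ball y (\<delta>/2)) (ball z (\<delta>/2))) Y"
    unfolding pairwise_def disjnt_def
  proof (intro ballI impI)
    fix y z assume "y \<in> Y" "z \<in> Y" "y \<noteq> z"
    hence yz: "dist y z > \<delta>" using sp unfolding sep_def by blast
    show "ball y (\<delta> / 2) \<inter> ball z (\<delta> / 2) = {}"
    proof (rule ccontr)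
      assume "ball y (\<delta> / 2) \<inter> ball z (\<delta> / 2) \<noteq> {}"
      then obtain u where "dist y u < \<delta>/2" "dist z u < \<delta>/2" by auto
      moreover have "dist y z \<le> dist y u + dist z u" by (metis dist_commute dist_triangle)
      ultimately show False using yz by linarith
    qed
  qed
  have "measure lebesgue (\<Union>y\<in>Y. ball y (\<delta>/2)) = (\<Sum>y\<in>Y. measure lebesgue (ball y (\<delta>/2)))"
    by (rule measure_UNION') (use fin disj in auto)
  also have "\<dots> = real (card Y) * (w * (\<delta>/2) ^ n)" using d by (simp add: content_ball w_def n_def)
  finally have eq1: "measure lebesgue (\<Union>y\<in>Y. ball y (\<delta>/2)) = real (card Y) * (w * (\<delta>/2) ^ n)" .
  have "measure lebesgue (\<Union>y\<in>Y. ball y (\<delta>/2)) \<le> measure lebesgue (cball p Bd - ball p A')"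
    by (rule measure_mono_fmeasurable) (use inc fin in auto)
  also have "\<dots> = measure lebesgue (cball p Bd) - measure lebesgue (ball p A')"
    by (rule measurable_measure_Diff) (use AB in auto)
  also have "\<dots> = w * (Bd ^ n - A' ^ n)" using Bd0 A'0 by (simp add: content_ball content_cball w_def n_def algebra_simps)
  also have "\<dots> \<le> w * (real n * Bd ^ (n - 1) * (Bd - A'))"
    using w pow_diff_le[OF A'0 AB, of n] by (intro mult_left_mono) auto
  also have "\<dots> \<le> w * (real n * (L + \<delta>) ^ (n - 1) * (3 * \<delta>))"
    using w Bd_le Bd_diff Bd0 A'0 AB d L
    by (intro mult_left_mono mult_mono power_mono) auto
  finally have key: "real (card Y) * (w * (\<delta>/2) ^ n) \<le> w * (real n * (L + \<delta>) ^ (n - 1) * (3 * \<delta>))"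
    using eq1 by simp
  have pn: "(\<delta>/2) ^ n = \<delta> ^ (n-1) * \<delta> / 2 ^ n" using n1
    by (metis (no_types, lifting) Suc_diff_le diff_Suc_1 power_Suc2 power_divide times_divide_eq_right)
  have "(L + \<delta>) ^ (n - 1) = \<delta> ^ (n-1) * (L/\<delta> + 1) ^ (n-1)"
    using d by (simp add: field_simps flip: power_mult_distrib)
  hence "real (card Y) * (w * (\<delta> ^ (n-1) * \<delta> / 2 ^ n)) \<le>
      w * (real n * (\<delta> ^ (n-1) * (L/\<delta> + 1) ^ (n-1)) * (3 * \<delta>))" using key pn by simp
  hence "real (card Y) * (w * \<delta> ^ (n-1) * \<delta>) / 2 ^ n \<le>
      (3 * real n * (L/\<delta> + 1) ^ (n-1)) * (w * \<delta> ^ (n-1) * \<delta>)" by (simp add: algebra_simps)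
  hence "real (card Y) * (w * \<delta> ^ (n-1) * \<delta>) \<le>
      (3 * real n * 2 ^ n * (L/\<delta> + 1) ^ (n-1)) * (w * \<delta> ^ (n-1) * \<delta>)"
    by (simp add: divide_le_eq algebra_simps)
  moreover have "w * \<delta> ^ (n-1) * \<delta> > 0" using w d by simp
  ultimately show ?thesis unfolding n_def by (simp add: mult_le_cancel_right)
qed

lemma shell_covers:
  fixes p :: "'a::euclidean_space"
  assumes d: "\<delta> > 0" and L: "L \<ge> 0"
  shows "covers \<delta> {y. \<bar>dist y p - m\<bar> \<le> \<delta> \<and> dist y p \<le> L}
      (3 * DIM('a) * 2 ^ DIM('a) * (L / \<delta> + 1) ^ (DIM('a) - 1))"
proof -
  define K where "K = nat \<lfloor>3 * DIM('a) * 2 ^ DIM('a) * (L / \<delta> + 1) ^ (DIM('a) - 1)\<rfloor>"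
  have "covers \<delta> {y. \<bar>dist y p - m\<bar> \<le> \<delta> \<and> dist y p \<le> L} (real K)"
  proof (rule packing_covers)
    fix Y assume "finite Y" "Y \<subseteq> {y. \<bar>dist y p - m\<bar> \<le> \<delta> \<and> dist y p \<le> L}" "sep \<delta> Y"
    from shell_sep_card[OF d L this] show "card Y \<le> K" unfolding K_def by linarith
  qed (use d in auto)
  moreover have "real K \<le> 3 * DIM('a) * 2 ^ DIM('a) * (L / \<delta> + 1) ^ (DIM('a) - 1)"
    unfolding K_def using d L by simp
  ultimately show ?thesis using covers_mono by blast
qed

definition Sw :: "('i \<Rightarrow> 'a \<Rightarrow> 'a) \<Rightarrow> 'i list \<Rightarrow> 'a \<Rightarrow> 'a" where
  "Sw S w = foldr (\<lambda>i f. S i \<circ> f) w id"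
definition cw :: "('i \<Rightarrow> real) \<Rightarrow> 'i list \<Rightarrow> real" where
  "cw c w = prod_list (map c w)"
definition Words :: "'i set \<Rightarrow> nat \<Rightarrow> 'i list set" where
  "Words I n = {w. set w \<subseteq> I \<and> length w = n}"

lemma Sw_Nil[simp]: "Sw S [] = id" by (simp add: Sw_def)
lemma Sw_Cons[simp]: "Sw S (i # w) = S i \<circ> Sw S w" by (simp add: Sw_def)
lemma Sw_snoc: "Sw S (w @ [i]) = Sw S w \<circ> S i" by (induction w) auto
lemma cw_Nil[simp]: "cw c [] = 1" by (simp add: cw_def)
lemma cw_Cons[simp]: "cw c (i # w) = c i * cw c w" by (simp add: cw_def)

lemma finite_Words: "finite I \<Longrightarrow> finite (Words I n)"
  unfolding Words_def by (rule finite_lists_length_eq)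

lemma Words_Suc: "Words I (Suc n) = (\<lambda>(i, w). i # w) ` (I \<times> Words I n)"
proof
  show "Words I (Suc n) \<subseteq> (\<lambda>(i, w). i # w) ` (I \<times> Words I n)"
  proof
    fix w assume "w \<in> Words I (Suc n)"
    then obtain i v where "w = i # v" "i \<in> I" "v \<in> Words I n"
      unfolding Words_def by (cases w) auto
    thus "w \<in> (\<lambda>(i, w). i # w) ` (I \<times> Words I n)" by force
  qed
qed (auto simp: Words_def)

lemma Sw_dist:
  assumes "\<And>i. i \<in> I \<Longrightarrow> similarity_with_ratio (c i) (S i)" "set w \<subseteq> I"
  shows "dist (Sw S w x) (Sw S w y) = cw c w * dist x y"
  using assms(2)
proof (induction w arbitrary: x y)
  case Nil then show ?case by simp
next
  case (Cons i w)
  have "similarity_with_ratio (c i) (S i)" using Cons.prems assms(1) by auto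
  then show ?case using Cons by (simp add: similarity_with_ratio_def)
qed

lemma Sw_fix: "(\<forall>i\<in>I. S i p = p) \<Longrightarrow> set w \<subseteq> I \<Longrightarrow> Sw S w p = p"
  by (induction w) auto

lemma cw_pos: "(\<And>i. i \<in> I \<Longrightarrow> 0 < c i \<and> c i < 1) \<Longrightarrow> set w \<subseteq> I \<Longrightarrow> 0 < cw c w"
  by (induction w) auto

lemma cw_le: "(\<And>i. i \<in> I \<Longrightarrow> 0 < c i \<and> c i \<le> q) \<Longrightarrow> set w \<subseteq> I \<Longrightarrow> cw c w \<le> q ^ length w"
proof (induction w)
  case Nil then show ?case by simp
next
  case (Cons i w)
  have a: "0 < cw c w" using Cons.prems by (induction w) (auto)
  have b: "c i \<le> q" "0 < c i" using Cons.prems by auto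
  have q0: "0 \<le> q" using b by linarith
  have ih: "cw c w \<le> q ^ length w" using Cons by auto
  have "c i * cw c w \<le> q * q ^ length w" by (rule mult_mono[OF b(1) ih q0]) (use a in simp)
  thus ?case by simp
qed

lemma sum_Words:
  assumes fin: "finite I" and pos: "\<And>i. i \<in> I \<Longrightarrow> 0 < c i" and sd: "(\<Sum>i\<in>I. c i powr s) = 1"
  shows "(\<Sum>w\<in>Words I n. cw c w powr s) = 1"
proof (induction n)
  case 0
  have "Words I 0 = {[]}" unfolding Words_def by auto
  then show ?case by simp
next
  case (Suc n)
  have inj: "inj_on (\<lambda>(i, w). i # w) (I \<times> Words I n)" by (auto simp: inj_on_def)
  have cwp: "w \<in> Words I n \<Longrightarrow> 0 \<le> cw c w" for w
    unfolding Words_def by (induction w arbitrary: n) (auto simp: pos less_imp_le)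
  have "(\<Sum>w\<in>Words I (Suc n). cw c w powr s) = (\<Sum>(i,w)\<in>I \<times> Words I n. cw c (i # w) powr s)"
    unfolding Words_Suc by (subst sum.reindex[OF inj]) (simp add: case_prod_unfold)
  also have "\<dots> = (\<Sum>i\<in>I. \<Sum>w\<in>Words I n. c i powr s * cw c w powr s)"
    unfolding sum.cartesian_product[symmetric]
    by (intro sum.cong refl) (auto simp: powr_mult pos less_imp_le cwp)
  also have "\<dots> = (\<Sum>i\<in>I. c i powr s)" by (simp add: Suc flip: sum_distrib_left)
  finally show ?case using sd by simp
qed

lemma F_decomp:
  assumes F_eq: "F = (\<Union>i\<in>I. S i ` F) \<union> C"
  shows "F \<subseteq> (\<Union>k<n. \<Union>w\<in>Words I k. Sw S w ` C) \<union> (\<Union>w\<in>Words I n. Sw S w ` F)"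
proof (induction n)
  case 0
  have "Words I 0 = {[]}" unfolding Words_def by auto
  then show ?case by simp
next
  case (Suc n)
  have "(\<Union>w\<in>Words I n. Sw S w ` F) \<subseteq> (\<Union>w\<in>Words I n. Sw S w ` C) \<union> (\<Union>w\<in>Words I (Suc n). Sw S w ` F)"
  proof
    fix y assume "y \<in> (\<Union>w\<in>Words I n. Sw S w ` F)"
    then obtain w x where w: "w \<in> Words I n" and x: "x \<in> F" and y: "y = Sw S w x" by blast
    from x F_eq have "x \<in> C \<or> (\<exists>i\<in>I. \<exists>z\<in>F. x = S i z)" by blast
    thus "y \<in> (\<Union>w\<in>Words I n. Sw S w ` C) \<union> (\<Union>w\<in>Words I (Suc n). Sw S w ` F)"
    proof
      assume "x \<in> C" thus ?thesis using w y by blast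
    next
      assume "\<exists>i\<in>I. \<exists>z\<in>F. x = S i z"
      then obtain i z where "i \<in> I" "z \<in> F" "x = S i z" by blast
      moreover have "w @ [i] \<in> Words I (Suc n)" using w \<open>i \<in> I\<close> unfolding Words_def by auto
      moreover have "y = Sw S (w @ [i]) z" using y \<open>x = S i z\<close> by (simp add: Sw_snoc)
      ultimately show ?thesis by blast
    qed
  qed
  note B = this
  show ?case
  proof
    fix x assume x: "x \<in> F"
    show "x \<in> (\<Union>k<Suc n. \<Union>w\<in>Words I k. Sw S w ` C) \<union> (\<Union>w\<in>Words I (Suc n). Sw S w ` F)"
    proof (cases "x \<in> (\<Union>k<n. \<Union>w\<in>Words I k. Sw S w ` C)")
      case True
      then obtain k where "k < n" "x \<in> (\<Union>w\<in>Words I k. Sw S w ` C)" by blast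
      thus ?thesis by (intro UnI1 UN_I[of k]) auto
    next
      case False
      hence "x \<in> (\<Union>w\<in>Words I n. Sw S w ` F)" using Suc.IH x by blast
      hence "x \<in> (\<Union>w\<in>Words I n. Sw S w ` C) \<union> (\<Union>w\<in>Words I (Suc n). Sw S w ` F)" using B by blast
      thus ?thesis by auto
    qed
  qed
qed

lemma cw_count: "set w \<subseteq> I \<Longrightarrow> finite I \<Longrightarrow> cw c w = (\<Prod>i\<in>I. c i ^ count_list w i)"
proof (induction w)
  case Nil then show ?case by simp
next
  case (Cons j w)
  have "(\<Prod>i\<in>I. c i ^ count_list (j # w) i) = (\<Prod>i\<in>I. (if i = j then c i else 1) * c i ^ count_list w i)"
    by (intro prod.cong) auto
  also have "\<dots> = (\<Prod>i\<in>I. (if i = j then c i else 1)) * (\<Prod>i\<in>I. c i ^ count_list w i)"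
    by (rule prod.distrib)
  also have "(\<Prod>i\<in>I. (if i = j then c i else 1)) = c j" using Cons.prems
    by (simp add: prod.delta)
  finally show ?case using Cons by simp
qed

lemma card_big_words:
  assumes fin: "finite I" and pos: "\<And>i. i \<in> I \<Longrightarrow> 0 < c i" and sd: "(\<Sum>i\<in>I. c i powr s) = 1"
    and s0: "s \<ge> 0" and r: "\<rho> > 0"
  shows "real (card {w\<in>Words I k. \<rho> \<le> cw c w}) \<le> \<rho> powr (-s)"
proof -
  let ?X = "{w\<in>Words I k. \<rho> \<le> cw c w}"
  have finW: "finite (Words I k)" using fin by (rule finite_Words)
  have "real (card ?X) * \<rho> powr s = (\<Sum>w\<in>?X. \<rho> powr s)" by simp
  also have "\<dots> \<le> (\<Sum>w\<in>?X. cw c w powr s)"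
    by (intro sum_mono powr_mono2) (use r s0 in auto)
  also have "\<dots> \<le> (\<Sum>w\<in>Words I k. cw c w powr s)"
    by (intro sum_mono2 finW) auto
  also have "\<dots> = 1" using sum_Words[OF fin pos sd] by simp
  finally have "real (card ?X) * \<rho> powr s \<le> 1" .
  hence "real (card ?X) \<le> 1 / \<rho> powr s" using r by (simp add: field_simps)
  thus ?thesis using r by (simp add: powr_minus_divide)
qed

lemma main_cover:
  fixes S :: "'i \<Rightarrow> 'a::euclidean_space \<Rightarrow> 'a" and c :: "'i \<Rightarrow> real"
  assumes finI: "finite I"
    and sim: "\<And>i. i \<in> I \<Longrightarrow> similarity_with_ratio (c i) (S i)"
    and ratio: "\<And>i. i \<in> I \<Longrightarrow> 0 < c i \<and> c i < 1"
    and fixp: "\<forall>i\<in>I. S i p = p"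
    and s0: "s \<ge> 0" and sd: "(\<Sum>i\<in>I. c i powr s) = 1"
    and F_eq: "F = (\<Union>i\<in>I. S i ` F) \<union> C"
    and FR: "F \<subseteq> cball p R" and R0: "R \<ge> 0"
    and q: "\<And>i. i \<in> I \<Longrightarrow> c i \<le> q"
    and d0: "0 < \<delta>" and dr: "\<delta> \<le> \<rho>" and r1: "\<rho> \<le> 1"
    and A0: "finite A0" "C \<subseteq> (\<Union>a\<in>A0. cball a \<delta>)"
    and qn: "q ^ n * R \<le> \<delta>"
  shows "real (covering_number \<delta> F) \<le> 1 + real n * \<rho> powr (-s) * real (card A0)
     + real n ^ card I * real (card A0) * (3 * real DIM('a) * 2 ^ DIM('a) * (\<rho> * R / \<delta> + 1) ^ (DIM('a) - 1))"
proof -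
  define K :: real where "K = 3 * real DIM('a) * 2 ^ DIM('a) * (\<rho> * R / \<delta> + 1) ^ (DIM('a) - 1)"
  define PA where "PA = (\<Union>k<n. \<Union>w\<in>{w\<in>Words I k. \<rho> \<le> cw c w}. Sw S w ` C)"
  define V where "V = (\<lambda>m. \<Prod>i\<in>I. c i ^ m i) ` (PiE I (\<lambda>_. {..<n}))"
  define Sh where "Sh = (\<lambda>v a. {y. \<bar>dist y p - v * dist a p\<bar> \<le> \<delta> \<and> dist y p \<le> \<rho> * R})"
  define PB where "PB = (\<Union>v\<in>V. \<Union>a\<in>A0. Sh v a)"
  have r0: "\<rho> > 0" using d0 dr by linarith
  have C_F: "C \<subseteq> F" by (subst F_eq) (rule Un_upper2)
  have cwp: "0 < cw c w" if "set w \<subseteq> I" for w by (rule cw_pos[OF ratio that])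
  have cw1: "cw c w \<le> 1" if wI: "set w \<subseteq> I" for w
  proof -
    have "cw c w \<le> 1 ^ length w" by (rule cw_le[OF _ wI]) (use ratio in force)
    thus ?thesis by simp
  qed
  have distp: "dist (Sw S w x) p = cw c w * dist x p" if wI: "set w \<subseteq> I" for w x
  proof -
    have "dist (Sw S w x) (Sw S w p) = cw c w * dist x p" by (rule Sw_dist[OF sim wI])
    moreover have "Sw S w p = p" using fixp wI by (rule Sw_fix)
    ultimately show ?thesis by simp
  qed
  have F_sub: "F \<subseteq> PA \<union> PB \<union> cball p \<delta>"
  proof
    fix y assume "y \<in> F"
    hence "y \<in> (\<Union>k<n. \<Union>w\<in>Words I k. Sw S w ` C) \<union> (\<Union>w\<in>Words I n. Sw S w ` F)"
      by (rule subsetD[OF F_decomp[OF F_eq]])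
    thus "y \<in> PA \<union> PB \<union> cball p \<delta>"
    proof
      assume "y \<in> (\<Union>k<n. \<Union>w\<in>Words I k. Sw S w ` C)"
      then obtain k w x where k: "k < n" and w: "w \<in> Words I k" and x: "x \<in> C" and y: "y = Sw S w x"
        by blast
      show ?thesis
      proof (cases "\<rho> \<le> cw c w")
        case True
        hence "w \<in> {w\<in>Words I k. \<rho> \<le> cw c w}" using w by simp
        hence "y \<in> PA" unfolding PA_def y using k x by (intro UN_I[of k] UN_I[of w] imageI) auto
        thus ?thesis by (intro UnI1)
      next
        case False
        have wI: "set w \<subseteq> I" and lw: "length w = k" using w by (auto simp: Words_def)
        from subsetD[OF A0(2) x] obtain a where a: "a \<in> A0" "dist a x \<le> \<delta>" by auto
        define m where "m = restrict (count_list w) I"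
        have "m \<in> PiE I (\<lambda>_. {..<n})"
          unfolding m_def using lw k by (auto intro: le_less_trans[OF count_le_length])
        moreover have "cw c w = (\<Prod>i\<in>I. c i ^ m i)" unfolding m_def
          using cw_count[OF wI finI] by simp
        ultimately have vV: "cw c w \<in> V" unfolding V_def by blast
        have dy: "dist y p = cw c w * dist x p" using distp[OF wI] y by simp
        have "\<bar>dist x p - dist a p\<bar> \<le> dist a x"
          by (metis abs_dist_diff_le dist_commute)
        hence "cw c w * \<bar>dist x p - dist a p\<bar> \<le> cw c w * \<delta>"
          using cwp[OF wI] a(2) by (intro mult_left_mono) auto
        moreover have "\<bar>dist y p - cw c w * dist a p\<bar> = cw c w * \<bar>dist x p - dist a p\<bar>"
          using dy cwp[OF wI] by (simp add: abs_mult right_diff_distrib[symmetric])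
        ultimately have "\<bar>dist y p - cw c w * dist a p\<bar> \<le> cw c w * \<delta>" by simp
        also have "\<dots> \<le> \<delta>" using cw1[OF wI] d0 by (simp add: mult_le_cancel_right1)
        finally have h1: "\<bar>dist y p - cw c w * dist a p\<bar> \<le> \<delta>" .
        have "dist x p \<le> R" using FR C_F x by (auto simp: dist_commute)
        hence "cw c w * dist x p \<le> \<rho> * R" using False r0
          by (intro mult_mono) auto
        hence "dist y p \<le> \<rho> * R" using dy by simp
        hence "y \<in> Sh (cw c w) a" using h1 unfolding Sh_def by simp
        hence "y \<in> PB" unfolding PB_def using vV a(1) by (intro UN_I[of "cw c w"] UN_I[of a])
        thus ?thesis by (intro UnI1 UnI2)
      qed
    next
      assume "y \<in> (\<Union>w\<in>Words I n. Sw S w ` F)"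
      then obtain w x where w: "w \<in> Words I n" and x: "x \<in> F" and y: "y = Sw S w x" by blast
      have wI: "set w \<subseteq> I" and lw: "length w = n" using w by (auto simp: Words_def)
      have "cw c w \<le> q ^ n" using cw_le[of I c q w] ratio q wI lw by auto
      moreover have "dist x p \<le> R" using FR x by (auto simp: dist_commute)
      ultimately have "cw c w * dist x p \<le> q ^ n * R"
        using cwp[OF wI] by (intro mult_mono) auto
      hence "dist y p \<le> \<delta>" using distp[OF wI] y qn by simp
      thus ?thesis by (simp add: dist_commute)
    qed
  qed
  have covC: "covers \<delta> C (real (card A0))" unfolding covers_def using A0 by blast
  have covA: "covers \<delta> PA (\<Sum>k<n. \<Sum>w\<in>{w\<in>Words I k. \<rho> \<le> cw c w}. real (card A0))"
    unfolding PA_def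
  proof (intro covers_UN)
    fix k w assume "w \<in> {w\<in>Words I k. \<rho> \<le> cw c w}"
    hence wI: "set w \<subseteq> I" by (auto simp: Words_def)
    show "covers \<delta> (Sw S w ` C) (real (card A0))"
    proof (rule covers_image[OF covC])
      fix x y
      have "dist (Sw S w x) (Sw S w y) = cw c w * dist x y" by (rule Sw_dist[OF sim wI])
      thus "dist (Sw S w x) (Sw S w y) \<le> dist x y"
        using cw1[OF wI] mult_right_mono[OF cw1[OF wI] zero_le_dist[of x y]] by simp
    qed
  qed (use finite_Words[OF finI] in auto)
  have "(\<Sum>k<n. \<Sum>w\<in>{w\<in>Words I k. \<rho> \<le> cw c w}. real (card A0))
      = (\<Sum>k<n. real (card {w\<in>Words I k. \<rho> \<le> cw c w}) * real (card A0))" by simp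
  also have "\<dots> \<le> (\<Sum>k<n. \<rho> powr (-s) * real (card A0))"
    by (intro sum_mono mult_right_mono card_big_words[OF finI _ sd s0 r0]) (use ratio in auto)
  also have "\<dots> = real n * \<rho> powr (-s) * real (card A0)" by simp
  finally have covA': "covers \<delta> PA (real n * \<rho> powr (-s) * real (card A0))"
    by (rule covers_mono[OF covA order.refl])
  have finV: "finite V" unfolding V_def using finI by (auto intro: finite_PiE)
  have cardV: "card V \<le> n ^ card I"
  proof -
    have "card V \<le> card (PiE I (\<lambda>_. {..<n}))" unfolding V_def
      by (rule card_image_le) (use finI in \<open>auto intro: finite_PiE\<close>)
    also have "\<dots> = n ^ card I" using finI by (simp add: card_PiE)
    finally show ?thesis .
  qed
  have covB: "covers \<delta> PB (\<Sum>v\<in>V. \<Sum>a\<in>A0. K)"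
    unfolding PB_def
  proof (intro covers_UN finV A0(1))
    fix v a show "covers \<delta> (Sh v a) K" unfolding Sh_def K_def
      using shell_covers[OF d0, of "\<rho> * R" p "v * dist a p"] r0 R0 by simp
  qed
  have K0: "K \<ge> 0" unfolding K_def using r0 R0 d0 by simp
  have "(\<Sum>v\<in>V. \<Sum>a\<in>A0. K) = real (card V) * real (card A0) * K" by simp
  also have "\<dots> \<le> real n ^ card I * real (card A0) * K"
    using cardV K0 by (intro mult_right_mono) (auto simp flip: of_nat_power)
  finally have covB': "covers \<delta> PB (real n ^ card I * real (card A0) * K)" by (rule covers_mono[OF covB order.refl])
  have "covers \<delta> (PA \<union> PB \<union> cball p \<delta>) (real n * \<rho> powr (-s) * real (card A0) + real n ^ card I * real (card A0) * K + 1)"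
    by (intro covers_Un covA' covB' covers_point)
  hence "covers \<delta> F (real n * \<rho> powr (-s) * real (card A0) + real n ^ card I * real (card A0) * K + 1)"
    by (rule covers_mono[OF _ F_sub order.refl])
  from covers_cov[OF this] show ?thesis unfolding K_def by simp
qed

lemma asym_aux:
  fixes a b L m :: real
  assumes "a > 0"
  shows "((\<lambda>u. (L + m * ln (a * u + b)) / u) \<longlongrightarrow> 0) at_top"
  using assms by real_asymp

lemma pointwise_bound:
  fixes N M X K R \<delta> \<rho> \<beta> s t u \<epsilon> :: real and n k j :: nat
  assumes main: "N \<le> 1 + real n * \<rho> powr (-s) * M + real n ^ k * M * (K * (\<rho> * R / \<delta> + 1) ^ j)"
    and rho: "\<rho> = \<delta> powr \<beta>" and d0: "0 < \<delta>" and d1: "\<delta> < 1" and u: "u = - ln \<delta>"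
    and b0: "0 < \<beta>" and b1: "\<beta> \<le> 1" and s0: "s \<ge> 0" and t: "t = s * \<beta>" and tj: "(1 - \<beta>) * j = t"
    and M0: "0 \<le> M" and M: "M \<le> exp (\<epsilon> * u)" and e0: "\<epsilon> > 0"
    and nX: "real n \<le> X" and X1: "X \<ge> 1" and R1: "R \<ge> 1" and K0: "K \<ge> 0"
  shows "N \<le> (2 + K * (R + 1) ^ j) * X ^ (k + 1) * exp ((t + \<epsilon>) * u)"
proof -
  have u0: "u > 0" using u d0 d1 by simp
  have lnd: "ln \<delta> = - u" using u by simp
  have t0: "t \<ge> 0" using t s0 b0 by simp
  have rho_e: "\<rho> = exp (- \<beta> * u)" using rho d0 lnd by (simp add: powr_def)
  have r0: "\<rho> > 0" using rho_e by simp
  have lnr: "ln \<rho> = - \<beta> * u" using rho_e by simp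
  have "\<rho> powr (-s) = exp (-s * ln \<rho>)" using r0 by (simp add: powr_def)
  also have "\<dots> = exp (t * u)" using lnr t by (simp add: algebra_simps)
  finally have rs: "\<rho> powr (-s) = exp (t * u)" .
  have de: "\<delta> = exp (- u)" using d0 lnd by (metis exp_ln)
  have "\<rho> / \<delta> = exp (- \<beta> * u - (- u))" using rho_e de by (simp only: exp_diff)
  also have "- \<beta> * u - (- u) = (1 - \<beta>) * u" by (simp add: algebra_simps)
  finally have rd: "\<rho> / \<delta> = exp ((1 - \<beta>) * u)" .
  have rd1: "\<rho> / \<delta> \<ge> 1" using rd b1 u0 by simp
  have "\<rho> * R / \<delta> + 1 \<le> \<rho> * R / \<delta> + \<rho> / \<delta>" using rd1 by simp
  also have "\<dots> = (R + 1) * (\<rho> / \<delta>)" by (simp add: algebra_simps add_divide_distrib)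
  also have "\<dots> = (R + 1) * exp ((1 - \<beta>) * u)" by (simp only: rd)
  finally have h1: "\<rho> * R / \<delta> + 1 \<le> (R + 1) * exp ((1 - \<beta>) * u)" .
  have h1p: "0 \<le> \<rho> * R / \<delta> + 1" using r0 d0 R1 by simp
  have "(\<rho> * R / \<delta> + 1) ^ j \<le> ((R + 1) * exp ((1 - \<beta>) * u)) ^ j"
    by (rule power_mono[OF h1 h1p])
  also have "\<dots> = (R + 1) ^ j * exp ((1 - \<beta>) * u) ^ j" by (rule power_mult_distrib)
  also have "exp ((1 - \<beta>) * u) ^ j = exp (real j * ((1 - \<beta>) * u))" by (rule exp_of_nat_mult[symmetric])
  also have "real j * ((1 - \<beta>) * u) = ((1 - \<beta>) * real j) * u" by (simp only: ac_simps)
  also have "\<dots> = t * u" by (simp only: tj)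
  finally have h2: "(\<rho> * R / \<delta> + 1) ^ j \<le> (R + 1) ^ j * exp (t * u)" .
  define E where "E = exp ((t + \<epsilon>) * u)"
  have E1: "E \<ge> 1" unfolding E_def using t0 e0 u0 by simp
  have EE: "exp (t * u) * exp (\<epsilon> * u) = E" unfolding E_def by (simp add: distrib_right exp_add)
  define G where "G = K * (R + 1) ^ j"
  have G0: "G \<ge> 0" unfolding G_def using K0 R1 by simp
  have "real n * \<rho> powr (-s) * M \<le> X * exp (t * u) * exp (\<epsilon> * u)"
    unfolding rs by (intro mult_mono nX M) (use M0 X1 in auto)
  also have "X * exp (t * u) * exp (\<epsilon> * u) = X * E" using EE by (simp only: mult.assoc)
  finally have p1: "real n * \<rho> powr (-s) * M \<le> X * E" .
  have "real n ^ k * M * (K * (\<rho> * R / \<delta> + 1) ^ j) \<le> X ^ k * exp (\<epsilon> * u) * (K * ((R + 1) ^ j * exp (t * u)))"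
    by (intro mult_mono power_mono nX M mult_left_mono h2 K0) (use M0 X1 K0 h1p in auto)
  also have "\<dots> = X ^ k * G * (exp (t * u) * exp (\<epsilon> * u))" unfolding G_def by (simp only: ac_simps)
  also have "\<dots> = X ^ k * G * E" by (simp only: EE)
  finally have p2: "real n ^ k * M * (K * (\<rho> * R / \<delta> + 1) ^ j) \<le> X ^ k * G * E" .
  have a1: "1 \<le> X ^ (k + 1)" by (rule one_le_power[OF X1])
  have a2: "X \<le> X ^ (k + 1)" using X1 power_increasing[of 1 "k+1" X] by simp
  have a3: "X ^ k \<le> X ^ (k + 1)" using X1 power_increasing[of k "k+1" X] by simp
  have a4: "X ^ k * G \<le> X ^ (k + 1) * G" using a3 G0 by (rule mult_right_mono)
  have b: "1 + X + X ^ k * G \<le> (2 + G) * X ^ (k + 1)" using a1 a2 a4 by (simp add: algebra_simps)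
  have "N \<le> 1 + X * E + X ^ k * G * E" using main p1 p2 by linarith
  also have "\<dots> \<le> E + X * E + X ^ k * G * E" using E1 by simp
  also have "\<dots> = (1 + X + X ^ k * G) * E" by (simp add: algebra_simps)
  also have "\<dots> \<le> ((2 + G) * X ^ (k + 1)) * E" using b E1 by (intro mult_right_mono) auto
  finally show ?thesis unfolding E_def G_def by simp
qed

lemma compact_cover_exists:
  fixes C :: "'a::metric_space set"
  assumes "compact C" "\<delta> > 0"
  shows "\<exists>A. finite A \<and> card A = covering_number \<delta> C \<and> C \<subseteq> (\<Union>x\<in>A. cball x \<delta>)"
proof -
  obtain A where A: "A \<subseteq> C" "finite A" "C \<subseteq> (\<Union>x\<in>A. ball x \<delta>)"
    using compactE_image[OF assms(1), of C "\<lambda>x. ball x \<delta>"] assms(2) by force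
  hence "\<exists>n A. finite A \<and> card A = n \<and> C \<subseteq> (\<Union>x\<in>A. cball x \<delta>)"
    by (intro exI[of _ "card A"] exI[of _ A]) (auto dest!: subsetD)
  hence "\<exists>A. finite A \<and> card A = (LEAST n. \<exists>A. finite A \<and> card A = n \<and> C \<subseteq> (\<Union>x\<in>A. cball x \<delta>))
      \<and> C \<subseteq> (\<Union>x\<in>A. cball x \<delta>)"
    by (rule LeastI_ex[of "\<lambda>n. \<exists>A. finite A \<and> card A = n \<and> C \<subseteq> (\<Union>x\<in>A. cball x \<delta>)"])
  thus ?thesis unfolding covering_number_def .
qed

lemma ln_bound_aux:
  fixes N Z u t \<epsilon> :: real
  assumes "0 < N" "N \<le> Z" "u > 0"
  shows "ln N / u \<le> ln Z / u"
  using assms by (intro divide_right_mono) auto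

theorem corollary4p13:
  fixes S :: "'i \<Rightarrow> 'a::euclidean_space \<Rightarrow> 'a"
    and c :: "'i \<Rightarrow> real"
    and I :: "'i set"
    and C F :: "'a set"
    and s :: real
  assumes dim: "DIM('a) \<ge> 2"
    and finI: "finite I" and neI: "I \<noteq> {}"
    and sim: "\<And>i. i \<in> I \<Longrightarrow> similarity_with_ratio (c i) (S i)"
    and ratio: "\<And>i. i \<in> I \<Longrightarrow> 0 < c i \<and> c i < 1"
    and fix_common: "\<exists>p. \<forall>i\<in>I. S i p = p"
    and s_nonneg: "s \<ge> 0"
    and s_def: "(\<Sum>i\<in>I. c i powr s) = 1"
    and C_compact: "compact C" and C_ne: "C \<noteq> {}"
    and C_dim: "upper_box_dim C = 0"
    and F_compact: "compact F" and F_ne: "F \<noteq> {}"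
    and F_eq: "F = (\<Union>i\<in>I. S i ` F) \<union> C"
  shows "upper_box_dim F \<le> ereal (s / (1 + s / (real DIM('a) - 1)))
         \<and> s / (1 + s / (real DIM('a) - 1)) < real DIM('a) - 1"
proof -
  define D1 :: real where "D1 = real DIM('a) - 1"
  have D1: "D1 \<ge> 1" unfolding D1_def using dim by simp
  define j :: nat where "j = DIM('a) - 1"
  have jD: "real j = D1" unfolding j_def D1_def using dim by (simp add: of_nat_diff)
  define t :: real where "t = s / (1 + s / D1)"
  define \<beta> :: real where "\<beta> = D1 / (s + D1)"
  have sD: "s + D1 > 0" using D1 s_nonneg by simp
  have t_alt: "t = s * D1 / (s + D1)" unfolding t_def using D1 sD by (simp add: field_simps)
  have b0: "0 < \<beta>" unfolding \<beta>_def using D1 sD by simp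
  have b1: "\<beta> \<le> 1" unfolding \<beta>_def using D1 sD s_nonneg by simp
  have tb: "t = s * \<beta>" unfolding t_alt \<beta>_def by simp
  have tj: "(1 - \<beta>) * real j = t" unfolding jD t_alt \<beta>_def using sD by (simp add: field_simps)
  have t0: "t \<ge> 0" using tb s_nonneg b0 by simp
  have tlt: "t < D1" unfolding t_alt using sD D1 s_nonneg by (simp add: field_simps)
  obtain p where fixp: "\<forall>i\<in>I. S i p = p" using fix_common by blast
  obtain r0 x0 where Fx0: "F \<subseteq> cball x0 r0" using compact_imp_bounded[OF F_compact]
    by (auto simp: bounded_subset_cball)
  define R where "R = max 1 (r0 + dist p x0)"
  have R1: "R \<ge> 1" unfolding R_def by simp
  have FR: "F \<subseteq> cball p R"
  proof
    fix y assume "y \<in> F"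
    hence "dist x0 y \<le> r0" using Fx0 by auto
    moreover have "dist p y \<le> dist p x0 + dist x0 y" by (rule dist_triangle)
    ultimately show "y \<in> cball p R" unfolding R_def by simp
  qed
  define q where "q = Max (c ` I)"
  have qI: "q \<in> c ` I" unfolding q_def using finI neI by simp
  have q0: "0 < q" and q1: "q < 1" using qI ratio by auto
  have cq: "\<And>i. i \<in> I \<Longrightarrow> c i \<le> q" unfolding q_def using finI by simp
  have lnq: "ln q < 0" using q0 q1 by simp
  define a :: real where "a = 1 / (- ln q)"
  define b :: real where "b = ln R / (- ln q) + 1"
  have a0: "a > 0" unfolding a_def using lnq by simp
  have lnR: "ln R \<ge> 0" using R1 by simp
  have "ln R / (- ln q) \<ge> 0" using lnq lnR by (intro divide_nonneg_pos) auto
  hence b1': "b \<ge> 1" unfolding b_def by linarith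
  define K :: real where "K = 3 * real DIM('a) * 2 ^ DIM('a)"
  have K0: "K \<ge> 0" unfolding K_def by simp
  define L :: real where "L = ln (2 + K * (R + 1) ^ j)"
  define m :: real where "m = real (card I + 1)"
  show ?thesis
  proof
    show "s / (1 + s / (real DIM('a) - 1)) < real DIM('a) - 1" using tlt unfolding t_def D1_def .
  next
    have "upper_box_dim F \<le> ereal t"
    proof (rule ereal_le_epsilon2)
      fix e :: real assume e0: "0 < e"
      define \<epsilon> where "\<epsilon> = e / 3"
      have ep: "\<epsilon> > 0" unfolding \<epsilon>_def using e0 by simp
      have ev1: "eventually (\<lambda>\<delta>::real. 0 < \<delta> \<and> \<delta> < 1) (at_right 0)"
        unfolding eventually_at_right_field by (intro exI[of _ 1]) auto
      have "Limsup (at_right 0) (\<lambda>\<delta>. ereal (ln (real (covering_number \<delta> C)) / (- ln \<delta>))) < ereal \<epsilon>"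
        using C_dim ep unfolding upper_box_dim_def by simp
      hence ev2: "eventually (\<lambda>\<delta>. ereal (ln (real (covering_number \<delta> C)) / (- ln \<delta>)) < ereal \<epsilon>) (at_right 0)"
        by (rule Limsup_lessD)
      have lim: "((\<lambda>u. (L + m * ln (a * u + b)) / u) \<longlongrightarrow> 0) at_top"
        by (rule asym_aux[OF a0])
      have "eventually (\<lambda>u. (L + m * ln (a * u + b)) / u < \<epsilon>) at_top"
        using order_tendstoD(2)[OF lim ep] .
      moreover have "filterlim (\<lambda>x::real. - ln x) at_top (at_right 0)" by real_asymp
      ultimately have ev3: "eventually (\<lambda>\<delta>. (L + m * ln (a * (- ln \<delta>) + b)) / (- ln \<delta>) < \<epsilon>) (at_right 0)"
        unfolding filterlim_iff by blast
      have "eventually (\<lambda>\<delta>. ereal (ln (real (covering_number \<delta> F)) / (- ln \<delta>)) \<le> ereal (t + 2 * \<epsilon>)) (at_right 0)"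
        using ev1 ev2 ev3
      proof eventually_elim
        case (elim \<delta>)
        hence d0: "0 < \<delta>" and d1: "\<delta> < 1" by auto
        define u where "u = - ln \<delta>"
        have u0: "u > 0" unfolding u_def using d0 d1 by simp
        have de: "\<delta> = exp (- u)" unfolding u_def using d0 by simp
        obtain A0 where A0: "finite A0" "card A0 = covering_number \<delta> C" "C \<subseteq> (\<Union>x\<in>A0. cball x \<delta>)"
          using compact_cover_exists[OF C_compact d0] by blast
        define M :: real where "M = real (card A0)"
        have M0: "M \<ge> 0" unfolding M_def by simp
        have "ln M / u < \<epsilon>" using elim(2) unfolding M_def A0(2) u_def by simp
        hence lnM: "ln M < \<epsilon> * u" using u0 by (simp add: divide_less_eq)
        have MB: "M \<le> exp (\<epsilon> * u)"
        proof (cases "M = 0")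
          case True then show ?thesis by simp
        next
          case False
          hence "M = exp (ln M)" using M0 by simp
          also have "\<dots> \<le> exp (\<epsilon> * u)" using lnM by simp
          finally show ?thesis .
        qed
        define \<rho> where "\<rho> = \<delta> powr \<beta>"
        have rho_e: "\<rho> = exp (- \<beta> * u)" unfolding \<rho>_def u_def using d0 by (simp add: powr_def)
        have dr: "\<delta> \<le> \<rho>" unfolding rho_e de using b1 u0 by (simp add: mult_left_le_one_le)
        have r1: "\<rho> \<le> 1" unfolding rho_e using b0 u0 by simp
        define x :: real where "x = (ln R + u) / (- ln q)"
        have x0: "x \<ge> 0" unfolding x_def using lnR u0 lnq by (intro divide_nonneg_pos) auto
        define n where "n = nat \<lceil>x\<rceil>"
        have nx: "real n \<ge> x" unfolding n_def by linarith
        have nx1: "real n \<le> x + 1" unfolding n_def using x0 by linarith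
        have xe: "x * (- ln q) = ln R + u" unfolding x_def using lnq by simp
        have "x * (- ln q) \<le> real n * (- ln q)" using nx lnq by (intro mult_right_mono) auto
        hence "real n * (- ln q) \<ge> ln R + u" using xe by simp
        hence nlq: "real n * ln q \<le> - ln R - u" by simp
        have "q ^ n = exp (real n * ln q)" using q0 by (simp add: exp_of_nat_mult)
        also have "\<dots> \<le> exp (- ln R - u)" using nlq by simp
        also have "\<dots> = exp (- u) / R" using R1 by (simp add: exp_diff exp_minus field_simps)
        finally have "q ^ n \<le> exp (- u) / R" .
        hence qn: "q ^ n * R \<le> \<delta>" using R1 de by (simp add: le_divide_eq)
        define X where "X = a * u + b"
        have nX: "real n \<le> X" using nx1 unfolding X_def x_def a_def b_def by (simp add: add_divide_distrib)
        have "a * u > 0" using a0 u0 by simp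
        hence X1: "X \<ge> 1" unfolding X_def using b1' by linarith
        have main: "real (covering_number \<delta> F) \<le> 1 + real n * \<rho> powr (-s) * real (card A0)
           + real n ^ card I * real (card A0) * (3 * real DIM('a) * 2 ^ DIM('a) * (\<rho> * R / \<delta> + 1) ^ (DIM('a) - 1))"
          by (rule main_cover[OF finI sim ratio fixp s_nonneg s_def F_eq FR _ cq d0 dr r1 A0(1) A0(3) qn])
            (use R1 in auto)
        have main': "real (covering_number \<delta> F) \<le> 1 + real n * \<rho> powr (-s) * M
           + real n ^ card I * M * (K * (\<rho> * R / \<delta> + 1) ^ j)"
          using main unfolding M_def K_def j_def .
        have NB: "real (covering_number \<delta> F) \<le> (2 + K * (R + 1) ^ j) * X ^ (card I + 1) * exp ((t + \<epsilon>) * u)"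
          by (rule pointwise_bound[OF main' \<rho>_def d0 d1 u_def b0 b1 s_nonneg tb tj M0 MB ep nX X1 R1 K0])
        define N where "N = real (covering_number \<delta> F)"
        have G0: "2 + K * (R + 1) ^ j > 0" using K0 R1 by (simp add: add_pos_nonneg)
        have X0: "X > 0" using X1 by simp
        have "ln N / u \<le> t + 2 * \<epsilon>"
        proof (cases "N = 0")
          case True then show ?thesis using t0 ep by simp
        next
          case False
          hence N0: "N > 0" unfolding N_def by simp
          have "ln N \<le> ln ((2 + K * (R + 1) ^ j) * X ^ (card I + 1) * exp ((t + \<epsilon>) * u))"
            using NB N0 unfolding N_def by simp
          also have "\<dots> = L + m * ln X + (t + \<epsilon>) * u"
          proof -
            have p1: "X ^ (card I + 1) > 0" using X0 by simp
            have "ln ((2 + K * (R + 1) ^ j) * X ^ (card I + 1) * exp ((t + \<epsilon>) * u))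
                = ln ((2 + K * (R + 1) ^ j) * X ^ (card I + 1)) + ln (exp ((t + \<epsilon>) * u))"
              using G0 p1 X0 by (simp add: ln_mult)
            also have "ln ((2 + K * (R + 1) ^ j) * X ^ (card I + 1)) = L + ln (X ^ (card I + 1))"
              unfolding L_def using G0 p1 X0 by (simp add: ln_mult)
            also have "ln (X ^ (card I + 1)) = m * ln X" unfolding m_def by (rule ln_realpow)
            finally show ?thesis by simp
          qed
          finally have "ln N \<le> L + m * ln X + (t + \<epsilon>) * u" .
          hence "ln N / u \<le> (L + m * ln X + (t + \<epsilon>) * u) / u" using u0 by (intro divide_right_mono) auto
          also have "\<dots> = (L + m * ln X) / u + (t + \<epsilon>)" using u0 by (simp add: add_divide_distrib)
          also have "(L + m * ln X) / u < \<epsilon>" using elim(3) unfolding X_def u_def .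
          hence "(L + m * ln X) / u + (t + \<epsilon>) \<le> t + 2 * \<epsilon>" by simp
          finally show ?thesis .
        qed
        thus ?case unfolding N_def u_def by simp
      qed
      hence "Limsup (at_right 0) (\<lambda>\<delta>. ereal (ln (real (covering_number \<delta> F)) / (- ln \<delta>))) \<le> ereal (t + 2 * \<epsilon>)"
        by (rule Limsup_bounded)
      also have "ereal (t + 2 * \<epsilon>) \<le> ereal t + ereal e" unfolding \<epsilon>_def using e0 by simp
      finally show "upper_box_dim F \<le> ereal t + ereal e" unfolding upper_box_dim_def .
    qed
    thus "upper_box_dim F \<le> ereal (s / (1 + s / (real DIM('a) - 1)))" unfolding t_def D1_def .
  qed
qed

end
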